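(* Every countable crowded $T_1$ space of weight smaller than $\mathfrak{m}_c$ is $\omega$-resolvable, i.e., it can be partitioned into countably many pairwise disjoint dense subsets.
   Context: A space is crowded if it has no isolated points. $\mathfrak{m}_c$ is the least cardinal $\kappa$ such that Martin's Axiom MA$(\kappa)$ for countable posets fails. *)

theory Defs
  imports "HOL-Analysis.Analysis"
begin

definition crowded :: "'a topology \<Rightarrow> bool" where
  "crowded X \<longleftrightarrow> (\<forall>x \<in> topspace X. \<not> openin X {x})"

definition is_base :: "'a topology \<Rightarrow> 'a set set \<Rightarrow> bool" where
  "is_base X B \<longleftrightarrow> (\<forall>b \<in> B. openin X b) \<and>
     (\<forall>U. openin X U \<longrightarrow> (\<forall>x \<in> U. \<exists>b \<in> B. x \<in> b \<and> b \<subseteq> U))"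

text \<open>B is a base of minimal cardinality, i.e. its cardinality is the weight of X.\<close>
definition weight_base :: "'a topology \<Rightarrow> 'a set set \<Rightarrow> bool" where
  "weight_base X B \<longleftrightarrow> is_base X B \<and> (\<forall>B'. is_base X B' \<longrightarrow> ordLeq2 (card_of B) (card_of B'))"

text \<open>Forcing notions: a countable poset (P, le), where "le q p" means q is stronger than p.
  Countable posets are represented (up to isomorphism) on subsets of nat.\<close>
definition countable_poset :: "nat set \<Rightarrow> (nat \<Rightarrow> nat \<Rightarrow> bool) \<Rightarrow> bool" where
  "countable_poset P le \<longleftrightarrow> countable P \<and> P \<noteq> {} \<and>
     (\<forall>p \<in> P. le p p) \<and>
     (\<forall>p \<in> P. \<forall>q \<in> P. \<forall>r \<in> P. le p q \<and> le q r \<longrightarrow> le p r) \<and>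
     (\<forall>p \<in> P. \<forall>q \<in> P. le p q \<and> le q p \<longrightarrow> p = q)"

definition dense_in_poset :: "nat set \<Rightarrow> (nat \<Rightarrow> nat \<Rightarrow> bool) \<Rightarrow> nat set \<Rightarrow> bool" where
  "dense_in_poset P le D \<longleftrightarrow> D \<subseteq> P \<and> (\<forall>p \<in> P. \<exists>q \<in> D. le q p)"

definition filter_in_poset :: "nat set \<Rightarrow> (nat \<Rightarrow> nat \<Rightarrow> bool) \<Rightarrow> nat set \<Rightarrow> bool" where
  "filter_in_poset P le G \<longleftrightarrow> G \<subseteq> P \<and> G \<noteq> {} \<and>
     (\<forall>p \<in> G. \<forall>q \<in> P. le p q \<longrightarrow> q \<in> G) \<and>
     (\<forall>p \<in> G. \<forall>q \<in> G. \<exists>r \<in> G. le r p \<and> le r q)"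

text \<open>MA(|K|) for countable posets: for every countable poset and every family of
  dense sets indexed by K there is a filter meeting all of them.\<close>
definition MA_countable :: "'i set \<Rightarrow> bool" where
  "MA_countable K \<longleftrightarrow> (\<forall>P le (D :: 'i \<Rightarrow> nat set). countable_poset P le \<longrightarrow>
      (\<forall>k \<in> K. dense_in_poset P le (D k)) \<longrightarrow>
      (\<exists>G. filter_in_poset P le G \<and> (\<forall>k \<in> K. G \<inter> D k \<noteq> {})))"

text \<open>weight(X) < m_c, where m_c is the least cardinal kappa such that MA(kappa) for
  countable posets fails: i.e. MA(kappa) holds for every cardinal kappa \<le> weight(X).\<close>
definition weight_less_mc :: "'a topology \<Rightarrow> bool" where
  "weight_less_mc X \<longleftrightarrow> (\<exists>B. weight_base X B \<and>
      (\<forall>K :: 'a set set set. ordLeq2 (card_of K) (card_of B) \<longrightarrow> MA_countable K))"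

definition omega_resolvable :: "'a topology \<Rightarrow> bool" where
  "omega_resolvable X \<longleftrightarrow> (\<exists>D :: nat \<Rightarrow> 'a set.
      (\<forall>n. D n \<subseteq> topspace X) \<and> (\<Union>n. D n) = topspace X \<and>
      (\<forall>m n. m \<noteq> n \<longrightarrow> D m \<inter> D n = {}) \<and>
      (\<forall>n. X closure_of (D n) = topspace X))"

end

theory Submission
  imports Defs
begin

lemma open_infinite:
  assumes "t1_space X" "crowded X" "openin X U" "U \<noteq> {}"
  shows "infinite U"
proof
  assume fin: "finite U"
  obtain x where x: "x \<in> U" using assms(4) by blast
  have U: "U \<subseteq> topspace X" using assms(3) openin_subset by blast
  have "closedin X (U - {x})" using assms(1) fin U unfolding t1_space_closedin_finite by auto
  hence "openin X (U - (U - {x}))" using assms(3) by (simp add: openin_diff)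
  moreover have "U - (U - {x}) = {x}" using x by auto
  ultimately show False using assms(2) x U unfolding crowded_def by auto
qed

lemma base_infinite:
  assumes "t1_space X" "crowded X" "is_base X B" "topspace X \<noteq> {}"
  shows "infinite B"
proof
  assume fin: "finite B"
  obtain x where x: "x \<in> topspace X" using assms(4) by blast
  let ?C = "insert (topspace X) {b\<in>B. x \<in> b}"
  have op: "openin X (\<Inter>?C)" using fin assms(3) unfolding is_base_def by (intro openin_Inter) auto
  have "\<Inter>?C = {x}"
  proof (rule ccontr)
    assume "\<Inter>?C \<noteq> {x}"
    moreover have "x \<in> \<Inter>?C" using x by auto
    ultimately obtain y where y: "y \<in> \<Inter>?C" "y \<noteq> x" by blast
    hence yt: "y \<in> topspace X" by auto
    obtain V where V: "openin X V" "x \<in> V" "y \<notin> V" using assms(1) x yt y(2) unfolding t1_space_def by metis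
    obtain b where b: "b \<in> B" "x \<in> b" "b \<subseteq> V" using assms(3) V unfolding is_base_def by blast
    then show False using y V by auto
  qed
  with op show False using assms(2) x unfolding crowded_def by auto
qed

lemma MA_apply:
  fixes Q :: "'q set" and leq :: "'q \<Rightarrow> 'q \<Rightarrow> bool" and E :: "'j \<Rightarrow> 'q set" and g :: "'j \<Rightarrow> 'i"
  assumes MA: "MA_countable (K::'i set)"
    and inj: "inj_on g I" "g ` I \<subseteq> K"
    and cQ: "countable Q" "Q \<noteq> {}"
    and refl: "\<forall>p\<in>Q. leq p p"
    and trans: "\<forall>p\<in>Q. \<forall>q\<in>Q. \<forall>r\<in>Q. leq p q \<and> leq q r \<longrightarrow> leq p r"
    and anti: "\<forall>p\<in>Q. \<forall>q\<in>Q. leq p q \<and> leq q p \<longrightarrow> p = q"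
    and dense: "\<forall>i\<in>I. E i \<subseteq> Q \<and> (\<forall>p\<in>Q. \<exists>q\<in>E i. leq q p)"
  shows "\<exists>G. G \<subseteq> Q \<and> G \<noteq> {} \<and> (\<forall>p\<in>G. \<forall>q\<in>Q. leq p q \<longrightarrow> q \<in> G)
           \<and> (\<forall>p\<in>G. \<forall>q\<in>G. \<exists>r\<in>G. leq r p \<and> leq r q) \<and> (\<forall>i\<in>I. G \<inter> E i \<noteq> {})"
proof -
  define f where "f = to_nat_on Q"
  define h where "h = from_nat_into Q"
  have hf: "\<And>q. q \<in> Q \<Longrightarrow> h (f q) = q" unfolding f_def h_def using cQ(1) by simp
  define P where "P = f ` Q"
  define le where "le = (\<lambda>m n. leq (h m) (h n))"
  define D where "D = (\<lambda>k. f ` (if k \<in> g ` I then E (inv_into I g k) else Q))"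
  have cp: "countable_poset P le"
    unfolding countable_poset_def
  proof (intro conjI ballI impI)
    show "countable P" unfolding P_def using cQ(1) by simp
    show "P \<noteq> {}" unfolding P_def using cQ(2) by simp
    fix p assume "p \<in> P"
    then obtain a where a: "a \<in> Q" "p = f a" unfolding P_def by auto
    show "le p p" unfolding le_def using a hf refl by simp
  next
    fix p q r assume "p \<in> P" "q \<in> P" "r \<in> P" and H: "le p q \<and> le q r"
    then obtain a b c where "a \<in> Q" "p = f a" "b \<in> Q" "q = f b" "c \<in> Q" "r = f c" unfolding P_def by auto
    then show "le p r" using H trans hf unfolding le_def by metis
  next
    fix p q assume "p \<in> P" "q \<in> P" and H: "le p q \<and> le q p"
    then obtain a b where "a \<in> Q" "p = f a" "b \<in> Q" "q = f b" unfolding P_def by auto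
    then show "p = q" using H anti hf unfolding le_def by metis
  qed
  have dn: "\<forall>k\<in>K. dense_in_poset P le (D k)"
  proof
    fix k assume "k \<in> K"
    show "dense_in_poset P le (D k)"
    proof (cases "k \<in> g ` I")
      case True
      then have ii: "inv_into I g k \<in> I" by (simp add: inv_into_into)
      let ?E = "E (inv_into I g k)"
      have sub: "?E \<subseteq> Q" using dense ii by blast
      have DE: "D k = f ` ?E" unfolding D_def using True by simp
      show ?thesis unfolding dense_in_poset_def
      proof (intro conjI ballI)
        show "D k \<subseteq> P" unfolding DE P_def using sub by auto
        fix p assume "p \<in> P"
        then obtain a where a: "a \<in> Q" "p = f a" unfolding P_def by auto
        then obtain q where q: "q \<in> ?E" "leq q a" using dense ii by blast
        have "h (f q) = q" using q sub hf by auto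
        hence "le (f q) p" using a q hf unfolding le_def by simp
        thus "\<exists>q\<in>D k. le q p" using q DE by auto
      qed
    next
      case False
      have DE: "D k = P" unfolding D_def P_def using False by simp
      show ?thesis unfolding dense_in_poset_def DE
      proof (intro conjI ballI)
        fix p assume "p \<in> P"
        then obtain a where a: "a \<in> Q" "p = f a" unfolding P_def by auto
        hence "le p p" unfolding le_def using hf refl by simp
        thus "\<exists>q\<in>P. le q p" using \<open>p \<in> P\<close> by blast
      qed simp
    qed
  qed
  obtain G' where G': "filter_in_poset P le G'" "\<forall>k\<in>K. G' \<inter> D k \<noteq> {}"
  proof -
    have "\<forall>P le (D :: 'i \<Rightarrow> nat set). countable_poset P le \<longrightarrow>
      (\<forall>k \<in> K. dense_in_poset P le (D k)) \<longrightarrow>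
      (\<exists>G. filter_in_poset P le G \<and> (\<forall>k \<in> K. G \<inter> D k \<noteq> {}))" using MA unfolding MA_countable_def .
    hence "\<exists>G. filter_in_poset P le G \<and> (\<forall>k \<in> K. G \<inter> D k \<noteq> {})" using cp dn by blast
    thus ?thesis using that by blast
  qed
  define G where "G = h ` G'"
  have G'P: "G' \<subseteq> P" using G'(1) unfolding filter_in_poset_def by auto
  have fh: "\<And>m. m \<in> P \<Longrightarrow> f (h m) = m" unfolding P_def using hf by auto
  have GQ: "G \<subseteq> Q" using G'P hf unfolding G_def P_def by auto
  have memG: "\<And>q. q \<in> Q \<Longrightarrow> q \<in> G \<longleftrightarrow> f q \<in> G'"
  proof
    fix q assume q: "q \<in> Q" and "q \<in> G"
    then obtain m where m: "m \<in> G'" "q = h m" unfolding G_def by auto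
    then have "f q = m" using fh G'P by auto
    thus "f q \<in> G'" using m by simp
  next
    fix q assume q: "q \<in> Q" and "f q \<in> G'"
    thus "q \<in> G" unfolding G_def using hf q by (metis imageI)
  qed
  show ?thesis
  proof (intro exI conjI)
    show "G \<subseteq> Q" by (rule GQ)
    show "G \<noteq> {}" using G'(1) unfolding G_def filter_in_poset_def by auto
    show "\<forall>p\<in>G. \<forall>q\<in>Q. leq p q \<longrightarrow> q \<in> G"
    proof (intro ballI impI)
      fix p q assume p: "p \<in> G" and q: "q \<in> Q" and pq: "leq p q"
      have "f p \<in> G'" using memG p GQ by auto
      moreover have "f q \<in> P" using q P_def by auto
      moreover have "le (f p) (f q)" using pq p q GQ hf unfolding le_def by auto
      ultimately have "f q \<in> G'" using G'(1) unfolding filter_in_poset_def by blast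
      thus "q \<in> G" using memG q by auto
    qed
    show "\<forall>p\<in>G. \<forall>q\<in>G. \<exists>r\<in>G. leq r p \<and> leq r q"
    proof (intro ballI)
      fix p q assume p: "p \<in> G" and q: "q \<in> G"
      have "f p \<in> G'" "f q \<in> G'" using memG p q GQ by auto
      then obtain r where r: "r \<in> G'" "le r (f p)" "le r (f q)"
        using G'(1) unfolding filter_in_poset_def by blast
      have "h r \<in> G" using r unfolding G_def by auto
      moreover have "leq (h r) p" "leq (h r) q" using r p q GQ hf unfolding le_def by auto
      ultimately show "\<exists>r\<in>G. leq r p \<and> leq r q" by blast
    qed
    show "\<forall>i\<in>I. G \<inter> E i \<noteq> {}"
    proof
      fix i assume i: "i \<in> I"
      have k: "g i \<in> K" "g i \<in> g ` I" using inj i by auto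
      have inv: "inv_into I g (g i) = i" using inj(1) i by (simp add: inv_into_f_f)
      obtain m where m: "m \<in> G'" "m \<in> D (g i)" using G'(2) k(1) by blast
      then obtain q where q: "q \<in> E i" "m = f q" unfolding D_def using k(2) inv by auto
      have "q \<in> Q" using q dense i by auto
      hence "q \<in> G" using memG m q by auto
      thus "G \<inter> E i \<noteq> {}" using q by auto
    qed
  qed
qed



theorem mainTheorem3:
  fixes X :: "'a topology"
  assumes "countable (topspace X)"
    and "t1_space X"
    and "crowded X"
    and "weight_less_mc X"
  shows "omega_resolvable X"
proof (cases "topspace X = {}")
  case True
  show ?thesis unfolding omega_resolvable_def
    by (rule exI[of _ "\<lambda>n. {}"]) (simp add: True)
next
  case False
  define T where "T = topspace X"
  obtain B where wB: "weight_base X B"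
    and hMA: "\<forall>K :: 'a set set set. ordLeq2 (card_of K) (card_of B) \<longrightarrow> MA_countable K"
    using assms(4) unfolding weight_less_mc_def by blast
  have base: "is_base X B" using wB unfolding weight_base_def by simp
  have Binf: "infinite B" using base_infinite[OF assms(2,3) base False] .
  define I where "I = B \<times> (UNIV :: nat set)"
  have "ordIso2 (card_of I) (card_of B)" unfolding I_def
    using card_of_Times_infinite[OF Binf, of "UNIV :: nat set"] Binf infinite_iff_card_of_nat[of B] by simp
  hence "ordLeq2 (card_of I) (card_of B)" using ordIso_iff_ordLeq by auto
  then obtain g where g: "inj_on g I" "g ` I \<subseteq> B" using card_of_ordLeq[of I B] by auto
  define K :: "'a set set set" where "K = (\<lambda>b. {b}) ` B"
  have "ordLeq2 (card_of K) (card_of B)" unfolding K_def by (rule card_of_image)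
  hence MA: "MA_countable K" using hMA by blast
  define g' where "g' = (\<lambda>p. {g p})"
  have g': "inj_on g' I" "g' ` I \<subseteq> K" using g unfolding g'_def K_def inj_on_def by auto
  define Q :: "('a \<times> nat) set set" where
    "Q = {A. finite A \<and> A \<subseteq> T \<times> UNIV \<and> (\<forall>x n m. (x,n) \<in> A \<longrightarrow> (x,m) \<in> A \<longrightarrow> n = m)}"
  define leq :: "('a \<times> nat) set \<Rightarrow> ('a \<times> nat) set \<Rightarrow> bool" where "leq = (\<lambda>A A'. A' \<subseteq> A)"
  define E where "E = (\<lambda>(b::'a set, n::nat). {A\<in>Q. b = {} \<or> (\<exists>x\<in>b. (x,n) \<in> A)})"
  have cT: "countable (T \<times> (UNIV :: nat set))" using assms(1) unfolding T_def by simp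
  have cQ: "countable Q"
    by (rule countable_subset[OF _ countable_Collect_finite_subset[OF cT]]) (auto simp: Q_def)
  have Qne: "Q \<noteq> {}" unfolding Q_def by auto
  have dense: "\<forall>i\<in>I. E i \<subseteq> Q \<and> (\<forall>p\<in>Q. \<exists>q\<in>E i. leq q p)"
  proof
    fix i assume "i \<in> I"
    then obtain b n where i: "i = (b,n)" "b \<in> B" unfolding I_def by auto
    show "E i \<subseteq> Q \<and> (\<forall>p\<in>Q. \<exists>q\<in>E i. leq q p)"
    proof (intro conjI ballI)
      show "E i \<subseteq> Q" unfolding E_def i by auto
      fix A assume A: "A \<in> Q"
      show "\<exists>q\<in>E i. leq q A"
      proof (cases "b = {}")
        case True
        then show ?thesis using A unfolding E_def i leq_def by auto
      next
        case bne: False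
        have ob: "openin X b" using base i unfolding is_base_def by auto
        hence bT: "b \<subseteq> T" unfolding T_def using openin_subset by blast
        have "infinite b" using open_infinite[OF assms(2,3) ob bne] .
        moreover have "finite (fst ` A)" using A unfolding Q_def by auto
        ultimately have "infinite (b - fst ` A)" by (rule Diff_infinite_finite[rotated])
        then obtain x where x: "x \<in> b" "x \<notin> fst ` A"
          using infinite_imp_nonempty by blast
        define A' where "A' = insert (x,n) A"
        have "A' \<in> Q" using A x bT unfolding Q_def A'_def by (force simp: image_iff)
        hence "A' \<in> E i" unfolding E_def i A'_def using x by auto
        moreover have "leq A' A" unfolding leq_def A'_def by auto
        ultimately show ?thesis by blast
      qed
    qed
  qed
  obtain G where G: "G \<subseteq> Q" "G \<noteq> {}" "\<forall>p\<in>G. \<forall>q\<in>Q. leq p q \<longrightarrow> q \<in> G"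
    "\<forall>p\<in>G. \<forall>q\<in>G. \<exists>r\<in>G. leq r p \<and> leq r q" "\<forall>i\<in>I. G \<inter> E i \<noteq> {}"
  proof -
    have "\<exists>G. G \<subseteq> Q \<and> G \<noteq> {} \<and> (\<forall>p\<in>G. \<forall>q\<in>Q. leq p q \<longrightarrow> q \<in> G)
           \<and> (\<forall>p\<in>G. \<forall>q\<in>G. \<exists>r\<in>G. leq r p \<and> leq r q) \<and> (\<forall>i\<in>I. G \<inter> E i \<noteq> {})"
      by (rule MA_apply[OF MA g' cQ Qne _ _ _ dense]) (auto simp: leq_def)
    thus ?thesis using that by blast
  qed
  define R where "R = \<Union>G"
  have single: "\<And>x n m. (x,n) \<in> R \<Longrightarrow> (x,m) \<in> R \<Longrightarrow> n = m"
  proof -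
    fix x n m assume "(x,n) \<in> R" "(x,m) \<in> R"
    then obtain A1 A2 where "A1 \<in> G" "A2 \<in> G" "(x,n) \<in> A1" "(x,m) \<in> A2" unfolding R_def by auto
    moreover then obtain r where "r \<in> G" "A1 \<subseteq> r" "A2 \<subseteq> r" using G(4) unfolding leq_def by blast
    ultimately show "n = m" using G(1) unfolding Q_def by blast
  qed
  define col where "col = (\<lambda>x. if \<exists>n. (x,n) \<in> R then SOME n. (x,n) \<in> R else 0)"
  have colR: "\<And>x n. (x,n) \<in> R \<Longrightarrow> col x = n"
  proof -
    fix x n assume xn: "(x,n) \<in> R"
    hence "(x, SOME n. (x,n) \<in> R) \<in> R" by (metis someI)
    thus "col x = n" unfolding col_def using xn single by auto
  qed
  define Dn where "Dn = (\<lambda>n. {x\<in>T. col x = n})"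
  show ?thesis unfolding omega_resolvable_def
  proof (intro exI[of _ Dn] conjI allI impI)
    fix n show "Dn n \<subseteq> topspace X" unfolding Dn_def T_def by auto
  next
    show "(\<Union>n. Dn n) = topspace X" unfolding Dn_def T_def by auto
  next
    fix m n :: nat assume "m \<noteq> n" thus "Dn m \<inter> Dn n = {}" unfolding Dn_def by auto
  next
    fix n
    show "X closure_of Dn n = topspace X"
    proof
      show "X closure_of Dn n \<subseteq> topspace X" by (rule closure_of_subset_topspace)
      show "topspace X \<subseteq> X closure_of Dn n"
        unfolding closure_of_def
      proof (intro subsetI CollectI conjI allI impI)
        fix x assume "x \<in> topspace X" thus "x \<in> topspace X" .
      next
        fix x U assume x: "x \<in> topspace X" and U: "x \<in> U \<and> openin X U"
        then obtain b where b: "b \<in> B" "x \<in> b" "b \<subseteq> U" using base unfolding is_base_def by blast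
        have "(b,n) \<in> I" unfolding I_def using b by auto
        then obtain A where A: "A \<in> G" "A \<in> E (b,n)" using G(5) by blast
        then obtain y where y: "y \<in> b" "(y,n) \<in> A" unfolding E_def using b by auto
        have "A \<in> Q" using A G(1) by auto
        hence yT: "y \<in> T" using y unfolding Q_def by auto
        have "(y,n) \<in> R" unfolding R_def using A y by auto
        hence "y \<in> Dn n" unfolding Dn_def using colR yT by auto
        thus "\<exists>y\<in>Dn n. y \<in> U" using y b by auto
      qed
    qed
  qed
qed

end
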